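(* Let $\Omega\subset\mathbb{C}$ be a bounded domain with smooth boundary, let $p_1,\dots,p_n\in\Omega$, and let $u$ be a solution of $\Delta u=e^{2u}$ in $\Omega-\{p_1,\dots,p_n\}$ with $u(x)\to+\infty$ as $x$ approaches $\partial\Omega$ or any $p_l$. Suppose that for each $l=1,\dots,n$, $$u(x)\ge-\log\Bigl(-r_l\,|x-p_l|\,\log\Bigl(\frac{|x-p_l|}{r_l}\Bigr)\Bigr)$$ near $p_l$, where $r_l>0$ is such that $B_{r_l}(p_l)\supset\Omega$. Then there exists a constant $C$ such that $$\Bigl|u(x)+\log\bigl(-|x-p_l|\log|x-p_l|\bigr)\Bigr|<C$$ in a neighborhood of $p_l$, for all $l=1,\dots,n$.
   Context: $\Delta$ is the Euclidean Laplacian; $B_r(p)$ is the open Euclidean disk of radius $r$ centered at $p$. *)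

theory Defs
  imports "HOL-Analysis.Analysis"
begin

definition dx :: "(complex \<Rightarrow> real) \<Rightarrow> complex \<Rightarrow> real" where
  "dx f = (\<lambda>z. frechet_derivative f (at z) 1)"

definition dy :: "(complex \<Rightarrow> real) \<Rightarrow> complex \<Rightarrow> real" where
  "dy f = (\<lambda>z. frechet_derivative f (at z) \<i>)"

definition C_inf_on :: "complex set \<Rightarrow> (complex \<Rightarrow> real) \<Rightarrow> bool" where
  "C_inf_on U f \<longleftrightarrow> (\<exists>F. f \<in> F \<and> (\<forall>g\<in>F. g differentiable_on U \<and> dx g \<in> F \<and> dy g \<in> F))"

definition C2_on :: "complex set \<Rightarrow> (complex \<Rightarrow> real) \<Rightarrow> bool" where
  "C2_on U f \<longleftrightarrow> f differentiable_on U \<and> dx f differentiable_on U \<and> dy f differentiable_on U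
     \<and> continuous_on U (dx (dx f)) \<and> continuous_on U (dy (dx f))
     \<and> continuous_on U (dx (dy f)) \<and> continuous_on U (dy (dy f))"

definition laplacian :: "(complex \<Rightarrow> real) \<Rightarrow> complex \<Rightarrow> real" where
  "laplacian f z = dx (dx f) z + dy (dy f) z"

definition smooth_boundary :: "complex set \<Rightarrow> bool" where
  "smooth_boundary \<Omega> \<longleftrightarrow> (\<forall>z\<in>frontier \<Omega>. \<exists>V \<rho>. open V \<and> z \<in> V \<and> C_inf_on V \<rho>
      \<and> (\<forall>x\<in>V. (dx \<rho> x, dy \<rho> x) \<noteq> (0, 0))
      \<and> \<Omega> \<inter> V = {x\<in>V. \<rho> x < 0})"

end

theory Submission
  imports Defs
begin


lemma second_deriv_max:
  fixes g g' :: "real \<Rightarrow> real"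
  assumes e: "e > 0"
    and d1: "\<And>t. \<bar>t\<bar> < e \<Longrightarrow> (g has_real_derivative g' t) (at t)"
    and d2: "(g' has_real_derivative c) (at 0)"
    and mx: "\<And>t. \<bar>t\<bar> < e \<Longrightarrow> g t \<le> g 0"
  shows "c \<le> 0"
proof (rule ccontr)
  assume "\<not> c \<le> 0"
  hence c: "c > 0" by simp
  have g0: "g' 0 = 0"
    by (rule DERIV_local_max[OF d1[of 0] e]) (use e mx in auto)
  obtain d where d: "d > 0" "\<And>h. h > 0 \<Longrightarrow> h < d \<Longrightarrow> g' 0 < g' (0 + h)"
    using DERIV_pos_inc_right[OF d2 c] by blast
  define t where "t = min d e / 2"
  have t: "t > 0" "t < d" "t < e" using d e by (auto simp: t_def)
  obtain z where z: "0 < z" "z < t" "g t - g 0 = (t - 0) * g' z"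
    using MVT2[of 0 t g g'] t d1 by force
  have "g' z > 0" using d(2)[of z] z t g0 by auto
  hence "t * g' z > 0" using z t by (simp add: mult_pos_pos)
  hence "g t > g 0" using z by simp
  with mx[of t] t show False by auto
qed

lemma dir_deriv:
  fixes f :: "complex \<Rightarrow> real"
  assumes "f differentiable (at (z + of_real t * d))"
  shows "((\<lambda>s. f (z + of_real s * d)) has_real_derivative
           frechet_derivative f (at (z + of_real t * d)) d) (at t)"
proof -
  have F: "(f has_derivative frechet_derivative f (at (z + of_real t * d))) (at (z + of_real t * d))"
    using assms frechet_derivative_works by blast
  have lin: "linear (frechet_derivative f (at (z + of_real t * d)))"
    using assms linear_frechet_derivative by blast
  have L: "((\<lambda>s. z + of_real s * d) has_derivative (\<lambda>s. of_real s * d)) (at t)"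
    by (auto intro!: derivative_eq_intros)
  have "((f \<circ> (\<lambda>s. z + of_real s * d)) has_derivative
      (frechet_derivative f (at (z + of_real t * d)) \<circ> (\<lambda>s. of_real s * d))) (at t)"
    using diff_chain_at[OF L F] by simp
  moreover have "(frechet_derivative f (at (z + of_real t * d)) \<circ> (\<lambda>s. of_real s * d))
      = (\<lambda>s. frechet_derivative f (at (z + of_real t * d)) d * s)"
  proof
    fix s :: real
    have "of_real s * d = s *\<^sub>R d" by (simp add: scaleR_conv_of_real)
    thus "(frechet_derivative f (at (z + of_real t * d)) \<circ> (\<lambda>s. of_real s * d)) s
      = frechet_derivative f (at (z + of_real t * d)) d * s"
      using linear_scale[OF lin] by (simp add: mult.commute)
  qed
  ultimately show ?thesis
    by (simp add: has_field_derivative_def o_def)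
qed

lemma radial1:
  fixes G G1 G2 :: "real \<Rightarrow> real"
  assumes Q: "open Q" "a^2 + k \<in> Q"
    and der: "\<forall>q\<in>Q. (G has_real_derivative G1 q) (at q) \<and> (G1 has_real_derivative G2 q) (at q)"
  shows "\<exists>e>0. (\<forall>s. \<bar>s\<bar> < e \<longrightarrow> ((\<lambda>s. G ((a+s)^2+k)) has_real_derivative G1 ((a+s)^2+k) * (2*(a+s))) (at s))
     \<and> ((\<lambda>s. G1 ((a+s)^2+k) * (2*(a+s))) has_real_derivative G2 (a^2+k) * (2*a) * (2*a) + G1 (a^2+k) * 2) (at 0)"
proof -
  have "continuous_on UNIV (\<lambda>s::real. (a+s)^2+k)" by (intro continuous_intros)
  hence "open ((\<lambda>s::real. (a+s)^2+k) -` Q \<inter> UNIV)"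
    using Q(1) continuous_on_open_vimage[of UNIV "\<lambda>s::real. (a+s)^2+k"] by simp
  hence op: "open ((\<lambda>s::real. (a+s)^2+k) -` Q)" by simp
  have "0 \<in> (\<lambda>s::real. (a+s)^2+k) -` Q" using Q(2) by simp
  then obtain e where e: "e > 0" "ball 0 e \<subseteq> (\<lambda>s::real. (a+s)^2+k) -` Q"
    using op unfolding open_contains_ball by blast
  have 1: "((\<lambda>s. G ((a+s)^2+k)) has_real_derivative G1 ((a+s)^2+k) * (2*(a+s))) (at s)"
    if "\<bar>s\<bar> < e" for s
  proof -
    have "s \<in> ball 0 e" using that by simp
    hence "(a+s)^2+k \<in> Q" using e by blast
    hence "(G has_real_derivative G1 ((a+s)^2+k)) (at ((a+s)^2+k))" using der by blast
    moreover have "((\<lambda>s. (a+s)^2+k) has_real_derivative 2*(a+s)) (at s)"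
      by (auto intro!: derivative_eq_intros)
    ultimately show ?thesis
      by (rule DERIV_chain2)
  qed
  have 2: "((\<lambda>s. G1 ((a+s)^2+k) * (2*(a+s))) has_real_derivative G2 (a^2+k) * (2*a) * (2*a) + G1 (a^2+k) * 2) (at 0)"
  proof -
    have "(G1 has_real_derivative G2 ((a+0)^2+k)) (at ((a+0)^2+k))" using der Q(2) by simp
    moreover have "((\<lambda>s. (a+s)^2+k) has_real_derivative 2*(a+0)) (at 0)"
      by (auto intro!: derivative_eq_intros)
    ultimately have "((\<lambda>s. G1 ((a+s)^2+k)) has_real_derivative G2 ((a+0)^2+k) * (2*(a+0))) (at 0)"
      by (rule DERIV_chain2)
    moreover have "((\<lambda>s. 2*(a+s)) has_real_derivative 2) (at (0::real))"
      by (auto intro!: derivative_eq_intros)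
    ultimately have "((\<lambda>s. G1 ((a+s)^2+k) * (2*(a+s))) has_real_derivative
        G2 ((a+0)^2+k) * (2*(a+0)) * (2*(a+0)) + 2 * G1 ((a+0)^2+k)) (at 0)"
      by (rule DERIV_mult)
    thus ?thesis by (simp add: mult.commute)
  qed
  show ?thesis using 1 2 e by blast
qed


lemma C2_facts:
  assumes "open U" "C2_on U u" "y \<in> U"
  shows "u differentiable (at y)" "dx u differentiable (at y)" "dy u differentiable (at y)"
  using assms unfolding C2_on_def
  by (auto simp: differentiable_on_eq_differentiable_at)

lemma comparison:
  fixes u :: "complex \<Rightarrow> real" and G G1 G2 :: "real \<Rightarrow> real"
  assumes U: "open U" "C2_on U u" and D: "open D" "bounded D" "D \<subseteq> U"
    and pde: "\<forall>x\<in>D. laplacian u x = exp (2 * u x)"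
    and Q: "open Q" "\<forall>x\<in>D. cmod (x - c)^2 \<in> Q"
    and der: "\<forall>q\<in>Q. (G has_real_derivative G1 q) (at q) \<and> (G1 has_real_derivative G2 q) (at q)"
    and sup: "\<forall>x\<in>D. 4 * cmod (x-c)^2 * G2 (cmod (x-c)^2) + 4 * G1 (cmod (x-c)^2) \<le> exp (2 * G (cmod (x-c)^2))"
    and bd: "\<forall>b\<in>frontier D. \<forall>\<eta>>0. eventually (\<lambda>x. u x - G (cmod (x-c)^2) < \<eta>) (at b within D)"
  shows "\<forall>x\<in>D. u x \<le> G (cmod (x-c)^2)"
proof (rule ccontr)
  define h where "h x = u x - G (cmod (x-c)^2)" for x
  assume "\<not> (\<forall>x\<in>D. u x \<le> G (cmod (x-c)^2))"
  then obtain x0 where x0: "x0 \<in> D" "h x0 > 0" by (auto simp: h_def)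
  define m where "m = h x0"
  have contu: "continuous_on D u"
    using U D(3) unfolding C2_on_def
    by (meson continuous_on_subset differentiable_imp_continuous_on)
  have "isCont (\<lambda>x. G (cmod (x-c)^2)) x" if "x \<in> D" for x
  proof -
    have "isCont G (cmod (x-c)^2)" using der Q that DERIV_isCont by blast
    moreover have "isCont (\<lambda>x. cmod (x-c)^2) x" by (intro continuous_intros)
    ultimately show ?thesis using continuous_at_compose[of x "\<lambda>x. cmod (x-c)^2" G]
      by (simp add: o_def)
  qed
  hence contv: "continuous_on D (\<lambda>x. G (cmod (x-c)^2))"
    by (simp add: continuous_at_imp_continuous_on)
  have conth: "continuous_on D h"
    unfolding h_def by (intro continuous_intros contu contv)
  define S where "S = D \<inter> h -` {m/2..}"
  have "closedin (top_of_set D) S"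
    unfolding S_def by (rule continuous_closedin_preimage[OF conth]) simp
  then obtain T where T: "closed T" "S = D \<inter> T" by (auto simp: closedin_closed)
  have "closure S \<subseteq> S"
  proof
    fix z assume z: "z \<in> closure S"
    have zT: "z \<in> T" using z T closure_minimal[of S T] by auto
    show "z \<in> S"
    proof (cases "z \<in> D")
      case True thus ?thesis using zT T by auto
    next
      case False
      have "z \<in> closure D" using z closure_mono[of S D] S_def by auto
      hence "z \<in> frontier D" using False D(1) by (simp add: frontier_def interior_open)
      moreover have "m/2 > 0" using x0 m_def by simp
      ultimately have "eventually (\<lambda>x. h x < m/2) (at z within D)"
        using bd unfolding h_def by blast
      then obtain d where d: "d > 0" "\<And>y. y \<in> D \<Longrightarrow> y \<noteq> z \<Longrightarrow> dist y z < d \<Longrightarrow> h y < m/2"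
        unfolding eventually_at by blast
      obtain y where y: "y \<in> S" "dist y z < d"
        using z d(1) closure_approachable by blast
      have "y \<in> D" "h y \<ge> m/2" using y S_def by auto
      moreover have "y \<noteq> z" using False \<open>y \<in> D\<close> by auto
      ultimately show ?thesis using d y by fastforce
    qed
  qed
  hence "closed S" using closure_subset_eq by blast
  moreover have "bounded S" using D(2) S_def bounded_subset by blast
  ultimately have "compact S" using compact_eq_bounded_closed by blast
  moreover have "x0 \<in> S" using x0 S_def m_def by auto
  moreover have "continuous_on S h" using conth S_def continuous_on_subset by blast
  ultimately obtain x1 where x1: "x1 \<in> S" "\<And>y. y \<in> S \<Longrightarrow> h y \<le> h x1"
    using continuous_attains_sup[of S h] by blast
  have x1D: "x1 \<in> D" using x1 S_def by auto
  have hx1: "h x1 \<ge> m" using x1(2)[OF \<open>x0 \<in> S\<close>] m_def by simp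
  have maxD: "h y \<le> h x1" if "y \<in> D" for y
  proof (cases "y \<in> S")
    case True thus ?thesis using x1 by blast
  next
    case False
    hence "h y < m/2" using that S_def by auto
    thus ?thesis using hx1 x0 m_def by simp
  qed
  obtain e where e: "e > 0" "ball x1 e \<subseteq> D" using D(1) x1D unfolding open_contains_ball by blast
  define a where "a = Re (x1 - c)"
  define b where "b = Im (x1 - c)"
  have q0': "cmod (x1 - c)^2 \<in> Q" using Q(2) x1D by blast
  have q0: "a^2 + b^2 \<in> Q" "b^2 + a^2 \<in> Q" using q0'
    by (simp_all add: a_def b_def cmod_power2 add.commute)
  obtain e1 where e1: "e1 > 0"
    "\<forall>s. \<bar>s\<bar> < e1 \<longrightarrow> ((\<lambda>s. G ((a+s)^2+b^2)) has_real_derivative G1 ((a+s)^2+b^2) * (2*(a+s))) (at s)"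
    "((\<lambda>s. G1 ((a+s)^2+b^2) * (2*(a+s))) has_real_derivative G2 (a^2+b^2) * (2*a) * (2*a) + G1 (a^2+b^2) * 2) (at 0)"
    using radial1[OF Q(1) q0(1) der] by blast
  obtain e2 where e2: "e2 > 0"
    "\<forall>s. \<bar>s\<bar> < e2 \<longrightarrow> ((\<lambda>s. G ((b+s)^2+a^2)) has_real_derivative G1 ((b+s)^2+a^2) * (2*(b+s))) (at s)"
    "((\<lambda>s. G1 ((b+s)^2+a^2) * (2*(b+s))) has_real_derivative G2 (b^2+a^2) * (2*b) * (2*b) + G1 (b^2+a^2) * 2) (at 0)"
    using radial1[OF Q(1) q0(2) der] by blast
  define e' where "e' = min e (min e1 e2)"
  have e': "e' > 0" "e' \<le> e" "e' \<le> e1" "e' \<le> e2" using e e1 e2 by (auto simp: e'_def)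
  have inD: "x1 + of_real s * d \<in> D" if "\<bar>s\<bar> < e'" "cmod d = 1" for s d
  proof -
    have "dist x1 (x1 + of_real s * d) = \<bar>s\<bar>" using that(2) by (simp add: dist_norm norm_mult)
    hence "x1 + of_real s * d \<in> ball x1 e" using e' that by simp
    thus ?thesis using e by blast
  qed
  have inU: "x1 + of_real s * d \<in> U" if "\<bar>s\<bar> < e'" "cmod d = 1" for s d
    using inD[OF that] D(3) by blast
  have D1x: "((\<lambda>s. h (x1 + of_real s * 1)) has_real_derivative
        (dx u (x1 + of_real t * 1) - G1 ((a+t)^2+b^2) * (2*(a+t)))) (at t)"
    if t: "\<bar>t\<bar> < e'" for t
  proof -
    have A: "((\<lambda>s. u (x1 + of_real s * 1)) has_real_derivative dx u (x1 + of_real t * 1)) (at t)"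
      unfolding dx_def by (rule dir_deriv) (use C2_facts(1)[OF U inU[of t "1"]] t in simp)
    have "\<bar>t\<bar> < e1" using t e' by linarith
    hence B: "((\<lambda>s. G ((a+s)^2+b^2)) has_real_derivative G1 ((a+t)^2+b^2) * (2*(a+t))) (at t)"
      using e1(2) by blast
    have C: "cmod (x1 + of_real s * 1 - c)^2 = (a+s)^2+b^2" for s
      by (simp add: a_def b_def cmod_power2 algebra_simps)
    have "((\<lambda>s. u (x1 + of_real s * 1) - G ((a+s)^2+b^2)) has_real_derivative
        (dx u (x1 + of_real t * 1) - G1 ((a+t)^2+b^2) * (2*(a+t)))) (at t)"
      by (rule DERIV_diff[OF A B])
    thus ?thesis unfolding h_def C .
  qed
  have D2x: "((\<lambda>t. dx u (x1 + of_real t * 1) - G1 ((a+t)^2+b^2) * (2*(a+t))) has_real_derivative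
        dx (dx u) x1 - (G2 (a^2+b^2) * (2*a) * (2*a) + G1 (a^2+b^2) * 2)) (at 0)"
  proof -
    have "((\<lambda>s. dx u (x1 + of_real s * 1)) has_real_derivative dx (dx u) (x1 + of_real 0 * 1)) (at 0)"
      unfolding dx_def[of "dx u"] by (rule dir_deriv) (use C2_facts(2)[OF U] x1D D(3) in auto)
    hence "((\<lambda>s. dx u (x1 + of_real s * 1)) has_real_derivative dx (dx u) x1) (at 0)" by simp
    thus ?thesis by (rule DERIV_diff[OF _ e1(3)])
  qed
  have MXx: "h (x1 + of_real t * 1) \<le> h (x1 + of_real 0 * 1)" if t: "\<bar>t\<bar> < e'" for t
    using maxD[OF inD[of t "1"]] t by simp
  have cx: "dx (dx u) x1 - (G2 (a^2+b^2) * (2*a) * (2*a) + G1 (a^2+b^2) * 2) \<le> 0"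
    by (rule second_deriv_max[OF e'(1) D1x D2x MXx])
  have D1y: "((\<lambda>s. h (x1 + of_real s * \<i>)) has_real_derivative
        (dy u (x1 + of_real t * \<i>) - G1 ((b+t)^2+a^2) * (2*(b+t)))) (at t)"
    if t: "\<bar>t\<bar> < e'" for t
  proof -
    have A: "((\<lambda>s. u (x1 + of_real s * \<i>)) has_real_derivative dy u (x1 + of_real t * \<i>)) (at t)"
      unfolding dy_def by (rule dir_deriv) (use C2_facts(1)[OF U inU[of t "\<i>"]] t in simp)
    have "\<bar>t\<bar> < e2" using t e' by linarith
    hence B: "((\<lambda>s. G ((b+s)^2+a^2)) has_real_derivative G1 ((b+t)^2+a^2) * (2*(b+t))) (at t)"
      using e2(2) by blast
    have C: "cmod (x1 + of_real s * \<i> - c)^2 = (b+s)^2+a^2" for s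
      by (simp add: a_def b_def cmod_power2 algebra_simps)
    have "((\<lambda>s. u (x1 + of_real s * \<i>) - G ((b+s)^2+a^2)) has_real_derivative
        (dy u (x1 + of_real t * \<i>) - G1 ((b+t)^2+a^2) * (2*(b+t)))) (at t)"
      by (rule DERIV_diff[OF A B])
    thus ?thesis unfolding h_def C .
  qed
  have D2y: "((\<lambda>t. dy u (x1 + of_real t * \<i>) - G1 ((b+t)^2+a^2) * (2*(b+t))) has_real_derivative
        dy (dy u) x1 - (G2 (b^2+a^2) * (2*b) * (2*b) + G1 (b^2+a^2) * 2)) (at 0)"
  proof -
    have "((\<lambda>s. dy u (x1 + of_real s * \<i>)) has_real_derivative dy (dy u) (x1 + of_real 0 * \<i>)) (at 0)"
      unfolding dy_def[of "dy u"] by (rule dir_deriv) (use C2_facts(3)[OF U] x1D D(3) in auto)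
    hence "((\<lambda>s. dy u (x1 + of_real s * \<i>)) has_real_derivative dy (dy u) x1) (at 0)" by simp
    thus ?thesis by (rule DERIV_diff[OF _ e2(3)])
  qed
  have MXy: "h (x1 + of_real t * \<i>) \<le> h (x1 + of_real 0 * \<i>)" if t: "\<bar>t\<bar> < e'" for t
    using maxD[OF inD[of t "\<i>"]] t by simp
  have cy: "dy (dy u) x1 - (G2 (b^2+a^2) * (2*b) * (2*b) + G1 (b^2+a^2) * 2) \<le> 0"
    by (rule second_deriv_max[OF e'(1) D1y D2y MXy])
  have q1: "cmod (x1 - c)^2 = a^2 + b^2" by (simp add: a_def b_def cmod_power2)
  have "laplacian u x1 \<le> 4 * cmod (x1-c)^2 * G2 (cmod (x1-c)^2) + 4 * G1 (cmod (x1-c)^2)"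
    using cx cy unfolding laplacian_def q1 by (simp add: algebra_simps power2_eq_square)
  also have "\<dots> \<le> exp (2 * G (cmod (x1-c)^2))" using sup x1D by blast
  finally have "exp (2 * u x1) \<le> exp (2 * G (cmod (x1-c)^2))" using pde x1D by simp
  hence "h x1 \<le> 0" by (simp add: h_def)
  thus False using hx1 x0 m_def by simp
qed



lemma exp_two_ln_div:
  fixes A B :: real
  assumes "A > 0" "B > 0"
  shows "exp (2 * (ln A - ln B)) = A^2 / B^2"
proof -
  have "exp (2 * (ln A - ln B)) = exp ((ln A - ln B) + (ln A - ln B))"
    by (simp only: mult_2)
  also have "\<dots> = exp (ln A - ln B) * exp (ln A - ln B)" by (rule exp_add)
  also have "exp (ln A - ln B) = A / B" using assms by (simp add: exp_diff)
  finally show ?thesis by (simp add: power2_eq_square)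
qed

lemma frac_aux:
  fixes D a b :: real
  assumes "D \<noteq> 0"
  shows "a / D^2 + b / D = (a + b * D) / D^2"
  using assms by (simp add: field_simps power2_eq_square)

lemma osserman:
  fixes u :: "complex \<Rightarrow> real"
  assumes U: "open U" "C2_on U u" and pde: "\<forall>x\<in>U. laplacian u x = exp (2 * u x)"
    and R: "R > 0" "cball x R \<subseteq> U"
  shows "u x \<le> ln (2 / R)"
proof -
  define G where "G q = ln (2*R) - ln (R^2 - q)" for q :: real
  define G1 where "G1 q = 1 / (R^2 - q)" for q :: real
  define G2 where "G2 q = 1 / (R^2 - q)^2" for q :: real
  have der: "\<forall>q\<in>{..<R^2}. (G has_real_derivative G1 q) (at q) \<and> (G1 has_real_derivative G2 q) (at q)"
  proof
    fix q assume "q \<in> {..<R^2}"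
    hence q: "q < R^2" by simp
    have "((\<lambda>q. ln (2*R) - ln (R^2 - q)) has_real_derivative 1 / (R^2 - q)) (at q)"
      using q by (auto intro!: derivative_eq_intros simp: field_simps)
    moreover have "((\<lambda>q. 1 / (R^2 - q)) has_real_derivative 1 / (R^2 - q)^2) (at q)"
      using q by (auto intro!: derivative_eq_intros simp: field_simps power2_eq_square)
    ultimately show "(G has_real_derivative G1 q) (at q) \<and> (G1 has_real_derivative G2 q) (at q)"
      unfolding G_def[abs_def] G1_def[abs_def] G2_def by simp
  qed
  have sub: "ball x R \<subseteq> U" using R(2) by auto
  have inQ: "\<forall>y\<in>ball x R. cmod (y - x)^2 \<in> {..<R^2}"
  proof
    fix y assume "y \<in> ball x R"
    hence "cmod (y - x) < R" by (simp add: dist_norm norm_minus_commute)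
    thus "cmod (y - x)^2 \<in> {..<R^2}" by (simp add: power_strict_mono)
  qed
  have sup: "\<forall>y\<in>ball x R. 4 * cmod (y-x)^2 * G2 (cmod (y-x)^2) + 4 * G1 (cmod (y-x)^2)
      \<le> exp (2 * G (cmod (y-x)^2))"
  proof
    fix y assume "y \<in> ball x R"
    hence qq: "cmod (y-x)^2 < R^2" using inQ by auto
    define q where "q = cmod (y-x)^2"
    have q: "q < R^2" using qq q_def by simp
    have "exp (2 * G q) = (2*R)^2 / (R^2 - q)^2"
      unfolding G_def using exp_two_ln_div[of "2*R" "R^2 - q"] R q by simp
    moreover have "4 * q * G2 q + 4 * G1 q = (2*R)^2 / (R^2 - q)^2"
    proof -
      have ne: "R^2 - q \<noteq> 0" using q by simp
      have "4 * q * G2 q + 4 * G1 q = (4 * q) / (R^2 - q)^2 + 4 / (R^2 - q)"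
        unfolding G1_def G2_def by simp
      also have "\<dots> = (4 * q + 4 * (R^2 - q)) / (R^2 - q)^2"
        using frac_aux[OF ne] by simp
      also have "\<dots> = (2*R)^2 / (R^2 - q)^2" by (simp add: algebra_simps power2_eq_square)
      finally show ?thesis .
    qed
    ultimately show "4 * cmod (y-x)^2 * G2 (cmod (y-x)^2) + 4 * G1 (cmod (y-x)^2)
      \<le> exp (2 * G (cmod (y-x)^2))" unfolding q_def by simp
  qed
  have bd: "\<forall>b\<in>frontier (ball x R). \<forall>\<eta>>0. eventually (\<lambda>y. u y - G (cmod (y-x)^2) < \<eta>) (at b within ball x R)"
  proof (intro ballI allI impI)
    fix b and \<eta> :: real assume b: "b \<in> frontier (ball x R)" and eta: "\<eta> > 0"
    have bs: "cmod (b - x) = R" using b R by (simp add: frontier_ball dist_norm norm_minus_commute)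
    have "b \<in> sphere x R" using b unfolding frontier_ball[OF R(1)] .
    hence "b \<in> U" using R(2) sphere_cball by blast
    hence "isCont u b" using C2_facts(1)[OF U] differentiable_imp_continuous_within by blast
    hence "(u \<longlongrightarrow> u b) (at b within ball x R)"
      using continuous_at_imp_continuous_at_within continuous_within by blast
    hence ev1: "eventually (\<lambda>y. u y < u b + 1) (at b within ball x R)"
      by (rule order_tendstoD) simp
    define M where "M = u b + 1 - \<eta>"
    have "((\<lambda>y. cmod (y - x)^2) \<longlongrightarrow> cmod (b - x)^2) (at b within ball x R)"
      by (intro tendsto_intros)
    hence "eventually (\<lambda>y. cmod (y - x)^2 > R^2 - 2 * R * exp (- M)) (at b within ball x R)"
      using bs R by (intro order_tendstoD(1)) auto
    moreover have "eventually (\<lambda>y. y \<in> ball x R) (at b within ball x R)"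
      by (simp add: eventually_at_filter)
    ultimately have ev2: "eventually (\<lambda>y. G (cmod (y-x)^2) > M) (at b within ball x R)"
    proof eventually_elim
      case (elim y)
      have q: "cmod (y - x) ^2 < R^2" using inQ elim(2) by auto
      have pos: "R^2 - cmod (y - x)^2 > 0" using q by simp
      have "R^2 - cmod (y - x)^2 < 2 * R * exp (-M)" using elim(1) by simp
      hence "ln (R^2 - cmod (y - x)^2) < ln (2 * R * exp (-M))"
        using pos by simp
      also have "\<dots> = ln (2*R) - M" using R by (simp add: ln_mult)
      finally show ?case unfolding G_def by simp
    qed
    from ev1 ev2 show "eventually (\<lambda>y. u y - G (cmod (y-x)^2) < \<eta>) (at b within ball x R)"
      by eventually_elim (simp add: M_def)
  qed
  have "\<forall>y\<in>ball x R. u y \<le> G (cmod (y-x)^2)"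
    by (rule comparison[OF U open_ball bounded_ball sub _ _ inQ der sup bd])
       (use pde sub in auto)
  moreover have "x \<in> ball x R" using R by simp
  ultimately have "u x \<le> G (cmod (x - x)^2)" by blast
  hence "u x \<le> G 0" by simp
  also have "G 0 = ln (2 / R)" unfolding G_def using R
    by (simp add: ln_div power2_eq_square ln_mult)
  finally show ?thesis .
qed


lemma alg1:
  fixes q L e :: real
  assumes "q \<noteq> 0" "L \<noteq> 0"
  shows "4 * q * (1/(2*q^2) - (2*L-1)/(4*q^2*L^2) + e/(2*q^2)) + 4 * (-1/(2*q) + 1/(2*q*L) - e/(2*q)) = 1/(q*L^2)"
  using assms by (simp add: field_simps power2_eq_square)

lemma derG:
  fixes \<rho> q e :: real assumes "0 < q" "ln \<rho> - ln q / 2 > 0"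
  shows "((\<lambda>q. - ln q / 2 - ln (ln \<rho> - ln q / 2) - e * (ln q / 2 - ln \<rho>)) has_real_derivative
     -1/(2*q) + 1/(2*q*(ln \<rho> - ln q / 2)) - e/(2*q)) (at q)"
  using assms by (auto intro!: derivative_eq_intros simp: field_simps)

lemma aux_inv:
  fixes L :: "real \<Rightarrow> real"
  assumes "(L has_real_derivative L') (at q)" "q \<noteq> 0" "L q \<noteq> 0"
  shows "((\<lambda>q. 1/(2*q*L q)) has_real_derivative -(2*L q + 2*q*L')/(2*q*L q)^2) (at q)"
  using assms by (auto intro!: derivative_eq_intros simp: field_simps power2_eq_square)

lemma alg2:
  fixes q L :: real
  assumes "q \<noteq> 0"
  shows "-(2*L + 2*q*(-1/(2*q)))/(2*q*L)^2 = -(2*L-1)/(4*q^2*L^2)"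
  using assms by (simp add: field_simps power2_eq_square)

lemma alg3:
  fixes a x y e z :: real
  shows "a + -x/y - -e/z = a - x/y + e/z"
  by simp

lemma derG1:
  fixes \<rho> q e :: real assumes "0 < q" "ln \<rho> - ln q / 2 > 0"
  shows "((\<lambda>q. -1/(2*q) + 1/(2*q*(ln \<rho> - ln q / 2)) - e/(2*q)) has_real_derivative
     1/(2*q^2) - (2*(ln \<rho> - ln q / 2)-1)/(4*q^2*(ln \<rho> - ln q / 2)^2) + e/(2*q^2)) (at q)"
proof -
  have dL: "((\<lambda>q. ln \<rho> - ln q / 2) has_real_derivative -1/(2*q)) (at q)"
    using assms by (auto intro!: derivative_eq_intros)
  have h1: "((\<lambda>q. 1/(2*q*(ln \<rho> - ln q / 2))) has_real_derivative
      -(2*(ln \<rho> - ln q / 2) + 2*q*(-1/(2*q)))/(2*q*(ln \<rho> - ln q / 2))^2) (at q)"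
    using aux_inv[where L="\<lambda>q. ln \<rho> - ln q / 2", OF dL] assms by simp
  have qne: "q \<noteq> 0" using assms by simp
  have i: "((\<lambda>q. 1/(2*q*(ln \<rho> - ln q / 2))) has_real_derivative
      -(2*(ln \<rho> - ln q / 2)-1)/(4*q^2*(ln \<rho> - ln q / 2)^2)) (at q)"
    by (rule DERIV_cong[OF h1 alg2[OF qne]])
  have a: "((\<lambda>q. -1/(2*q)) has_real_derivative 1/(2*q^2)) (at q)"
    using assms by (auto intro!: derivative_eq_intros simp: field_simps power2_eq_square)
  have c: "((\<lambda>q. e/(2*q)) has_real_derivative -e/(2*q^2)) (at q)"
    using assms by (auto intro!: derivative_eq_intros simp: field_simps power2_eq_square)
  have "((\<lambda>q. -1/(2*q) + 1/(2*q*(ln \<rho> - ln q / 2)) - e/(2*q)) has_real_derivative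
     1/(2*q^2) + -(2*(ln \<rho> - ln q / 2)-1)/(4*q^2*(ln \<rho> - ln q / 2)^2) - -e/(2*q^2)) (at q)"
    by (intro DERIV_diff DERIV_add a i c)
  thus ?thesis by (rule DERIV_cong) (rule alg3)
qed


lemma puncture_eps:
  fixes u :: "complex \<Rightarrow> real" and z0 :: complex and \<rho> e :: real
  assumes U: "open U" "C2_on U u" and pde: "\<forall>x\<in>U. laplacian u x = exp (2 * u x)"
    and rho: "0 < \<rho>" "\<rho> < 1" "cball z0 \<rho> - {z0} \<subseteq> U"
    and apriori: "\<forall>x. 0 < cmod (x - z0) \<and> cmod (x - z0) < \<rho>/2 \<longrightarrow> u x \<le> ln 4 - ln (cmod (x - z0))"
    and e: "e > 0"
  shows "\<forall>x. 0 < cmod (x - z0) \<and> cmod (x - z0) < \<rho> \<longrightarrow>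
     u x \<le> - ln (cmod (x - z0)) - ln (ln \<rho> - ln (cmod (x - z0))) + e * (ln \<rho> - ln (cmod (x - z0)))"
proof -
  define G where "G q = - ln q / 2 - ln (ln \<rho> - ln q / 2) - e * (ln q / 2 - ln \<rho>)" for q :: real
  define G1 where "G1 q = -1/(2*q) + 1/(2*q*(ln \<rho> - ln q / 2)) - e/(2*q)" for q :: real
  define G2 where "G2 q = 1/(2*q^2) - (2*(ln \<rho> - ln q / 2)-1)/(4*q^2*(ln \<rho> - ln q / 2)^2) + e/(2*q^2)" for q :: real
  define D where "D = ball z0 \<rho> - {z0}"
  have Lpos: "ln \<rho> - ln q / 2 > 0" if "0 < q" "q < \<rho>^2" for q
  proof -
    have "ln q < ln (\<rho>^2)" using that rho by simp
    thus ?thesis using rho by (simp add: ln_realpow)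
  qed
  have Gr: "G (r^2) = - ln r - ln (ln \<rho> - ln r) + e * (ln \<rho> - ln r)" if "r > 0" for r
    using that by (simp add: G_def ln_realpow algebra_simps)
  have der: "\<forall>q\<in>{0<..<\<rho>^2}. (G has_real_derivative G1 q) (at q) \<and> (G1 has_real_derivative G2 q) (at q)"
  proof
    fix q assume "q \<in> {0<..<\<rho>^2}"
    hence q: "0 < q" "q < \<rho>^2" by auto
    show "(G has_real_derivative G1 q) (at q) \<and> (G1 has_real_derivative G2 q) (at q)"
      unfolding G_def[abs_def] G1_def[abs_def] G2_def
      using derG[OF q(1) Lpos[OF q]] derG1[OF q(1) Lpos[OF q]] by blast
  qed
  have rD: "0 < cmod (y - z0) \<and> cmod (y - z0) < \<rho>" if "y \<in> D" for y
    using that by (auto simp: D_def dist_norm norm_minus_commute)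
  have inQ: "\<forall>y\<in>D. cmod (y - z0)^2 \<in> {0<..<\<rho>^2}"
  proof
    fix y assume "y \<in> D"
    hence "0 < cmod (y - z0)" "cmod (y - z0) < \<rho>" using rD by auto
    thus "cmod (y - z0)^2 \<in> {0<..<\<rho>^2}" by (simp add: power_strict_mono)
  qed
  have DU: "D \<subseteq> U"
  proof
    fix y assume "y \<in> D"
    hence "y \<in> cball z0 \<rho> - {z0}" by (auto simp: D_def)
    thus "y \<in> U" using rho(3) by blast
  qed
  have sup: "\<forall>y\<in>D. 4 * cmod (y-z0)^2 * G2 (cmod (y-z0)^2) + 4 * G1 (cmod (y-z0)^2)
      \<le> exp (2 * G (cmod (y-z0)^2))"
  proof
    fix y assume "y \<in> D"
    define q where "q = cmod (y-z0)^2"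
    have q: "0 < q" "q < \<rho>^2" using inQ \<open>y \<in> D\<close> q_def by auto
    define Lq where "Lq = ln \<rho> - ln q / 2"
    have Lq: "Lq > 0" using Lpos[OF q] Lq_def by simp
    have lhs: "4 * q * G2 q + 4 * G1 q = 1 / (q * Lq^2)"
      unfolding G1_def G2_def Lq_def[symmetric] using alg1[of q Lq e] q Lq by simp
    have "2 * G q = 2 * e * Lq - ln (q * Lq^2)"
      unfolding G_def Lq_def[symmetric] using q Lq
      by (simp add: ln_mult ln_realpow Lq_def algebra_simps)
    hence "exp (2 * G q) = exp (2 * e * Lq) / (q * Lq^2)"
      using q Lq by (simp add: exp_diff)
    moreover have "exp (2 * e * Lq) \<ge> 1" using e Lq by simp
    ultimately have "1 / (q * Lq^2) \<le> exp (2 * G q)"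
      using q Lq by (simp add: divide_right_mono)
    thus "4 * cmod (y-z0)^2 * G2 (cmod (y-z0)^2) + 4 * G1 (cmod (y-z0)^2)
      \<le> exp (2 * G (cmod (y-z0)^2))" using lhs q_def by simp
  qed
  have openD: "open D" unfolding D_def by (simp add: open_delete)
  have boundedD: "bounded D" unfolding D_def by (meson Diff_subset bounded_ball bounded_subset)
  have bd: "\<forall>b\<in>frontier D. \<forall>\<eta>>0. eventually (\<lambda>y. u y - G (cmod (y-z0)^2) < \<eta>) (at b within D)"
  proof (intro ballI allI impI)
    fix b and \<eta> :: real assume b: "b \<in> frontier D" and eta: "\<eta> > 0"
    have "b \<in> closure D" "b \<notin> D" using b openD by (auto simp: frontier_def interior_open)
    moreover have "closure D \<subseteq> cball z0 \<rho>"
      using closure_mono[of D "ball z0 \<rho>"] closure_ball[OF rho(1)] D_def by auto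
    ultimately have bc: "b \<in> cball z0 \<rho>" "b \<notin> D" by auto
    show "eventually (\<lambda>y. u y - G (cmod (y-z0)^2) < \<eta>) (at b within D)"
    proof (cases "b = z0")
      case True
      define K where "K = 2 * \<bar>ln 4 - ln (e/2)\<bar> / e"
      define d where "d = min (\<rho>/2) (\<rho> * exp (-K))"
      have d: "d > 0" using rho by (simp add: d_def)
      show ?thesis unfolding eventually_at True
      proof (intro exI[of _ d] conjI allI impI ballI d)
        fix y assume y: "y \<in> D" "y \<noteq> z0 \<and> dist y z0 < d"
        define r where "r = cmod (y - z0)"
        have r: "0 < r" "r < \<rho>/2" "r < \<rho> * exp (-K)"
          using y d_def r_def by (auto simp: dist_norm)
        define s where "s = ln \<rho> - ln r"
        have ub: "u y \<le> ln 4 - ln r" using apriori r r_def by auto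
        have Gy: "G (cmod (y - z0)^2) = - ln r - ln s + e * s"
          using Gr[OF r(1)] r_def s_def by simp
        have "ln r < ln (\<rho> * exp (-K))" using r by simp
        hence sK: "s > K" using rho by (simp add: s_def ln_mult)
        have K0: "K \<ge> 0" using e by (simp add: K_def)
        have spos: "s > 0" using sK K0 by simp
        have "ln (e/2 * s) \<le> e/2 * s - 1" using e spos by (intro ln_le_minus_one) simp
        moreover have "ln (e/2 * s) = ln (e/2) + ln s" using e spos by (subst ln_mult) auto
        ultimately have lns: "ln s \<le> e/2 * s - 1 - ln (e/2)" by linarith
        have "e * K / 2 = \<bar>ln 4 - ln (e/2)\<bar>" using e by (simp add: K_def)
        hence "e * s / 2 > \<bar>ln 4 - ln (e/2)\<bar>" using sK e
          by (metis divide_strict_right_mono mult_strict_left_mono zero_less_numeral)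
        hence "ln 4 + ln s - e * s < \<eta>" using lns eta by linarith
        thus "u y - G (cmod (y - z0)^2) < \<eta>" using ub Gy by linarith
      qed
    next
      case False
      have bs: "cmod (b - z0) = \<rho>"
      proof -
        have "dist z0 b \<le> \<rho>" using bc by simp
        moreover have "\<not> dist z0 b < \<rho>" using bc False by (auto simp: D_def)
        ultimately show ?thesis by (simp add: dist_norm norm_minus_commute)
      qed
      have "b \<in> U" using bc False rho(3) by auto
      hence "isCont u b" using C2_facts(1)[OF U] differentiable_imp_continuous_within by blast
      hence "(u \<longlongrightarrow> u b) (at b within D)"
        using continuous_at_imp_continuous_at_within continuous_within by blast
      hence ev1: "eventually (\<lambda>y. u y < u b + 1) (at b within D)"
        by (rule order_tendstoD) simp
      define M where "M = u b + 1 - \<eta>"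
      have "((\<lambda>y. ln (cmod (y - z0))) \<longlongrightarrow> ln (cmod (b - z0))) (at b within D)"
        using bs rho by (intro tendsto_intros) auto
      hence "eventually (\<lambda>y. ln (cmod (y - z0)) > ln \<rho> - exp (- M)) (at b within D)"
        using bs by (intro order_tendstoD(1)) auto
      moreover have "eventually (\<lambda>y. y \<in> D) (at b within D)"
        by (simp add: eventually_at_filter)
      ultimately have ev2: "eventually (\<lambda>y. G (cmod (y-z0)^2) > M) (at b within D)"
      proof eventually_elim
        case (elim y)
        define r where "r = cmod (y - z0)"
        have r: "0 < r" "r < \<rho>" using rD[OF elim(2)] r_def by auto
        define s where "s = ln \<rho> - ln r"
        have s: "0 < s" "s < exp (-M)" using elim(1) r rho by (auto simp: s_def r_def)
        have "ln s < -M" using s by (metis exp_less_cancel_iff exp_ln)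
        moreover have "ln r < 0" using r rho by simp
        moreover have "e * s \<ge> 0" using e s by simp
        moreover have "G (cmod (y-z0)^2) = - ln r - ln s + e * s"
          using Gr[OF r(1)] r_def s_def by simp
        ultimately show ?case by linarith
      qed
      from ev1 ev2 show ?thesis
        by eventually_elim (simp add: M_def)
    qed
  qed
  have cmp: "\<forall>y\<in>D. u y \<le> G (cmod (y-z0)^2)"
    by (rule comparison[OF U openD boundedD DU _ _ inQ der sup bd])
       (use pde DU in auto)
  show ?thesis
  proof (intro allI impI)
    fix x assume x: "0 < cmod (x - z0) \<and> cmod (x - z0) < \<rho>"
    hence "x \<in> D" by (auto simp: D_def dist_norm norm_minus_commute)
    hence "u x \<le> G (cmod (x-z0)^2)" using cmp by blast
    thus "u x \<le> - ln (cmod (x - z0)) - ln (ln \<rho> - ln (cmod (x - z0))) + e * (ln \<rho> - ln (cmod (x - z0)))"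
      using Gr[of "cmod (x - z0)"] x by simp
  qed
qed



lemma local_estimate:
  fixes u :: "complex \<Rightarrow> real" and z0 :: complex
  assumes U: "open U" "C2_on U u" and pde: "\<forall>x\<in>U. laplacian u x = exp (2 * u x)"
    and rho0: "0 < \<rho>0" "cball z0 \<rho>0 - {z0} \<subseteq> U"
    and R: "R > 0" "\<delta>0 > 0"
    and low: "\<forall>x. 0 < cmod (x - z0) \<and> cmod (x - z0) < \<delta>0 \<longrightarrow>
           u x \<ge> - ln (- R * cmod (x - z0) * ln (cmod (x - z0) / R))"
  shows "\<exists>\<delta>>0. \<forall>x. 0 < cmod (x - z0) \<and> cmod (x - z0) < \<delta> \<longrightarrow>
           \<bar>u x + ln (- cmod (x - z0) * ln (cmod (x - z0)))\<bar> \<le> \<bar>ln R\<bar> + ln 2"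
proof -
  define \<rho> where "\<rho> = min \<rho>0 (1/4)"
  have rho: "0 < \<rho>" "\<rho> < 1" "\<rho> \<le> 1/4" using rho0 by (auto simp: \<rho>_def)
  have rhoU: "cball z0 \<rho> - {z0} \<subseteq> U"
    using rho0(2) cball_subset_cball_iff[of z0 \<rho> z0 \<rho>0] by (auto simp: \<rho>_def)
  have apriori: "\<forall>x. 0 < cmod (x - z0) \<and> cmod (x - z0) < \<rho>/2 \<longrightarrow> u x \<le> ln 4 - ln (cmod (x - z0))"
  proof (intro allI impI)
    fix x assume x: "0 < cmod (x - z0) \<and> cmod (x - z0) < \<rho>/2"
    define r where "r = cmod (x - z0)"
    have r: "0 < r" "r < \<rho>/2" using x r_def by auto
    have "cball x (r/2) \<subseteq> U"
    proof
      fix y assume "y \<in> cball x (r/2)"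
      hence dy: "cmod (x - y) \<le> r/2" by (simp add: dist_norm)
      have "r \<le> cmod (x - y) + cmod (y - z0)" unfolding r_def
        using norm_triangle_ineq[of "x - y" "y - z0"] by simp
      hence pos: "cmod (y - z0) > 0" using dy r by linarith
      have t2: "cmod (y - z0) \<le> cmod (y - x) + cmod (x - z0)"
        using norm_triangle_ineq[of "y - x" "x - z0"] by simp
      have "cmod (y - x) = cmod (x - y)" by (rule norm_minus_commute)
      hence "cmod (y - z0) \<le> \<rho>" using t2 dy r r_def by linarith
      hence "y \<in> cball z0 \<rho> - {z0}" using pos by (auto simp: dist_norm norm_minus_commute)
      thus "y \<in> U" using rhoU by blast
    qed
    hence "u x \<le> ln (2 / (r/2))" using osserman[OF U pde, of "r/2" x] r by simp
    also have "ln (2 / (r/2)) = ln 4 - ln r" using r by (simp add: ln_div)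
    finally show "u x \<le> ln 4 - ln (cmod (x - z0))" using r_def by simp
  qed
  have W: "u x \<le> - ln (cmod (x - z0)) - ln (ln \<rho> - ln (cmod (x - z0)))"
    if x: "0 < cmod (x - z0)" "cmod (x - z0) < \<rho>" for x
  proof (rule ccontr)
    define r where "r = cmod (x - z0)"
    define s where "s = ln \<rho> - ln r"
    define Wv where "Wv = - ln r - ln s"
    assume "\<not> ?thesis"
    hence gt: "u x > Wv" using r_def s_def Wv_def by simp
    have spos: "s > 0" using x r_def s_def rho(1) by (simp add: ln_less_cancel_iff)
    define e where "e = (u x - Wv) / (2 * s)"
    have e: "e > 0" using gt spos by (simp add: e_def)
    have "u x \<le> Wv + e * s"
      using puncture_eps[OF U pde rho(1,2) rhoU apriori e] x r_def s_def Wv_def by auto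
    also have "e * s = (u x - Wv) / 2" using spos by (simp add: e_def)
    finally have "u x \<le> Wv + (u x - Wv) / 2" .
    thus False using gt by (simp add: field_simps)
  qed
  define \<delta> where "\<delta> = min (\<rho>^2) (min \<delta>0 (min R (1/R)))"
  have \<delta>: "\<delta> > 0" using rho R by (simp add: \<delta>_def)
  show ?thesis
  proof (intro exI[of _ \<delta>] conjI allI impI \<delta>)
    fix x assume x: "0 < cmod (x - z0) \<and> cmod (x - z0) < \<delta>"
    define r where "r = cmod (x - z0)"
    have r: "0 < r" "r < \<rho>^2" "r < \<delta>0" "r < R" "r < 1/R" using x r_def by (auto simp: \<delta>_def)
    have "\<rho>^2 < \<rho>" using rho by (simp add: power2_eq_square)
    hence r1: "r < \<rho>" "r < 1" using r rho by auto
    have lnr: "ln r < 0" using r r1 by simp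
    have lnsplit: "ln (- r * ln r) = ln r + ln (- ln r)"
    proof -
      have "ln (r * (- ln r)) = ln r + ln (- ln r)" using r lnr by (subst ln_mult) auto
      thus ?thesis by simp
    qed
    have "u x \<le> - ln r - ln (ln \<rho> - ln r)" using W[of x] x r_def r1 by simp
    moreover have "ln (- ln r) \<le> ln 2 + ln (ln \<rho> - ln r)"
    proof -
      have "ln r < ln (\<rho>^2)" using r rho by simp
      hence "ln r < 2 * ln \<rho>" using rho by (simp add: ln_realpow)
      hence "- ln r \<le> 2 * (ln \<rho> - ln r)" by simp
      hence "ln (- ln r) \<le> ln (2 * (ln \<rho> - ln r))" using lnr by simp
      also have "\<dots> = ln 2 + ln (ln \<rho> - ln r)"
        using \<open>ln r < 2 * ln \<rho>\<close> lnr by (subst ln_mult) auto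
      finally show ?thesis .
    qed
    ultimately have up: "u x + ln (- r * ln r) \<le> ln 2" using lnsplit by linarith
    have "u x \<ge> - ln (- R * r * ln (r / R))" using low r r_def by auto
    moreover have "ln (- R * r * ln (r / R)) = ln R + ln r + ln (ln R - ln r)"
    proof -
      have eq: "ln (r / R) = ln r - ln R" using r R by (simp add: ln_div)
      have "- R * r * ln (r / R) = R * (r * (ln R - ln r))" unfolding eq by (simp add: algebra_simps)
      moreover have "ln R - ln r > 0" using r R by simp
      ultimately show ?thesis using r R by (simp add: ln_mult)
    qed
    moreover have "ln (ln R - ln r) \<le> ln 2 + ln (- ln r)"
    proof -
      have "r * R < 1" using r R by (simp add: field_simps)
      hence "ln (r * R) < 0" using r R by simp
      hence "ln R \<le> - ln r" using r R by (simp add: ln_mult)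
      hence "ln R - ln r \<le> 2 * (- ln r)" by simp
      moreover have "ln R - ln r > 0" using r R by simp
      ultimately have "ln (ln R - ln r) \<le> ln (2 * (- ln r))" by simp
      also have "\<dots> = ln 2 + ln (- ln r)" using lnr by (subst ln_mult) auto
      finally show ?thesis .
    qed
    ultimately have lo: "u x + ln (- r * ln r) \<ge> - ln R - ln 2" using lnsplit by linarith
    have "ln 2 \<ge> (0::real)" by simp
    hence "\<bar>u x + ln (- r * ln r)\<bar> \<le> \<bar>ln R\<bar> + ln 2" using up lo by linarith
    thus "\<bar>u x + ln (- cmod (x - z0) * ln (cmod (x - z0)))\<bar> \<le> \<bar>ln R\<bar> + ln 2"
      using r_def by simp
  qed
qed

theorem proposition5p2:
  fixes \<Omega> :: "complex set" and n :: nat and p :: "nat \<Rightarrow> complex" and u :: "complex \<Rightarrow> real"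
  assumes dom: "open \<Omega>" "connected \<Omega>" "bounded \<Omega>" "smooth_boundary \<Omega>"
    and pts: "\<And>l. l < n \<Longrightarrow> p l \<in> \<Omega>"
    and reg: "C2_on (\<Omega> - p ` {..<n}) u"
    and pde: "\<And>x. x \<in> \<Omega> - p ` {..<n} \<Longrightarrow> laplacian u x = exp (2 * u x)"
    and bdry: "\<And>b. b \<in> frontier \<Omega> \<Longrightarrow> filterlim u at_top (at b within (\<Omega> - p ` {..<n}))"
    and sing: "\<And>l. l < n \<Longrightarrow> filterlim u at_top (at (p l) within (\<Omega> - p ` {..<n}))"
    and lower: "\<And>l. l < n \<Longrightarrow> \<exists>r>0. \<Omega> \<subseteq> ball (p l) r \<and>
        (\<exists>\<delta>>0. \<forall>x. 0 < cmod (x - p l) \<and> cmod (x - p l) < \<delta> \<longrightarrow>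
           u x \<ge> - ln (- r * cmod (x - p l) * ln (cmod (x - p l) / r)))"
  shows "\<exists>C. \<forall>l<n. \<exists>\<delta>>0. \<forall>x. 0 < cmod (x - p l) \<and> cmod (x - p l) < \<delta> \<longrightarrow>
           \<bar>u x + ln (- cmod (x - p l) * ln (cmod (x - p l)))\<bar> < C"
proof -
  define U where "U = \<Omega> - p ` {..<n}"
  have openU: "open U" unfolding U_def
    by (intro open_Diff dom(1) finite_imp_closed finite_imageI) simp
  have pdeU: "\<forall>x\<in>U. laplacian u x = exp (2 * u x)" using pde U_def by blast
  have regU: "C2_on U u" using reg U_def by simp
  have loc: "\<forall>l\<in>{..<n}. \<exists>B. \<exists>\<delta>>0. \<forall>x. 0 < cmod (x - p l) \<and> cmod (x - p l) < \<delta> \<longrightarrow>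
           \<bar>u x + ln (- cmod (x - p l) * ln (cmod (x - p l)))\<bar> \<le> B"
  proof
    fix l assume "l \<in> {..<n}"
    hence l: "l < n" by simp
    obtain R \<delta>0 where R: "R > 0" "\<delta>0 > 0"
      "\<forall>x. 0 < cmod (x - p l) \<and> cmod (x - p l) < \<delta>0 \<longrightarrow>
           u x \<ge> - ln (- R * cmod (x - p l) * ln (cmod (x - p l) / R))"
      using lower[OF l] by blast
    define F where "F = p ` {..<n} - {p l}"
    have "open (\<Omega> - F)" unfolding F_def
      by (intro open_Diff dom(1) finite_imp_closed) simp
    moreover have "p l \<in> \<Omega> - F" using pts[OF l] F_def by simp
    ultimately obtain \<rho>0 where \<rho>0: "\<rho>0 > 0" "cball (p l) \<rho>0 \<subseteq> \<Omega> - F"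
      using open_contains_cball by blast
    have "cball (p l) \<rho>0 - {p l} \<subseteq> U" using \<rho>0(2) by (auto simp: U_def F_def)
    from local_estimate[OF openU regU pdeU \<rho>0(1) this R]
    show "\<exists>B. \<exists>\<delta>>0. \<forall>x. 0 < cmod (x - p l) \<and> cmod (x - p l) < \<delta> \<longrightarrow>
           \<bar>u x + ln (- cmod (x - p l) * ln (cmod (x - p l)))\<bar> \<le> B" by blast
  qed
  then obtain Bf where Bf: "\<forall>l\<in>{..<n}. \<exists>\<delta>>0. \<forall>x. 0 < cmod (x - p l) \<and> cmod (x - p l) < \<delta> \<longrightarrow>
           \<bar>u x + ln (- cmod (x - p l) * ln (cmod (x - p l)))\<bar> \<le> Bf l"
    using bchoice[OF loc] by blast
  define C where "C = (\<Sum>l<n. \<bar>Bf l\<bar>) + 1"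
  show ?thesis
  proof (rule exI[of _ C], intro allI impI)
    fix l assume l: "l < n"
    have "\<bar>Bf l\<bar> \<le> (\<Sum>l<n. \<bar>Bf l\<bar>)"
      using l by (intro member_le_sum) auto
    hence BC: "Bf l < C" unfolding C_def by linarith
    obtain \<delta> where "\<delta> > 0" "\<forall>x. 0 < cmod (x - p l) \<and> cmod (x - p l) < \<delta> \<longrightarrow>
           \<bar>u x + ln (- cmod (x - p l) * ln (cmod (x - p l)))\<bar> \<le> Bf l"
      using Bf l by blast
    thus "\<exists>\<delta>>0. \<forall>x. 0 < cmod (x - p l) \<and> cmod (x - p l) < \<delta> \<longrightarrow>
           \<bar>u x + ln (- cmod (x - p l) * ln (cmod (x - p l)))\<bar> < C"
      using BC by force
  qed
qed

end
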